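(* Let $p\in(0,1]$, let $(\mathcal M,d,0)$ be a finite pointed $p$-metric space and let $M_1,M_2\subset\mathcal M$ satisfy $M_1\cup M_2=\mathcal M$, $0\in M_2$, $M_1\cap M_2=\{x_0\}$ for some $x_0\in\mathcal M\setminus\{0\}$, and $|M_1|\ge2$. Let $\mathcal M_1=(M_1,d,x_0)$ and $\mathcal M_2=(M_2,d,0)$. Let $T\in\mathcal T(\mathcal M)$, $T_1\in\mathcal T(\mathcal M_1)$ (rooted at $x_0$), $T_2\in\mathcal T(\mathcal M_2)$ (rooted at $0$) be such that $E^T=E^{T_1}\cup E^{T_2}$. Let $a\in\mathbb R^{\mathcal M\setminus\{0\}}$, $a_1:=a|_{M_1\setminus\{x_0\}}$, and $a_2\in\mathbb R^{M_2\setminus\{0\}}$ defined by $a_2(y)=a(y)$ for $y\in M_2\setminus\{0,x_0\}$ and $a_2(x_0)=\sum_{w\in M_1}a(w)$. Then \[T(a)^p=T_1(a_1)^p+T_2(a_2)^p.\]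
   Context: A $p$-metric space is a set with $d$ such that $d^p$ is a metric; pointed means a distinguished base point. For a finite pointed $p$-metric space $(\mathcal K,d,r)$, $\mathcal T(\mathcal K)$ is the set of trees with vertex set $\mathcal K$ rooted at $r$; $E^T$ denotes the (unordered) edge set of $T$. For $x\ne r$, $\mathrm{pred}_T(x)$ is the neighbour of $x$ on the path to $r$, $e_x^T=\{\mathrm{pred}_T(x),x\}$, and $V_x^T$ is the vertex set of the subtree rooted at $x$. For $b\in\mathbb R^{\mathcal K\setminus\{r\}}$, $T(b)=\big(\sum_{x\in\mathcal K\setminus\{r\}}|(\sum_{y\in V_x^T}b_y)\,d(e_x^T)|^p\big)^{1/p}$. *)

theory Defs
  imports Complex_Main
begin

definition p_metric :: "'a set \<Rightarrow> ('a \<Rightarrow> 'a \<Rightarrow> real) \<Rightarrow> real \<Rightarrow> bool" where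
  "p_metric M d p \<longleftrightarrow>
     (\<forall>x\<in>M. \<forall>y\<in>M. d x y \<ge> 0 \<and> (d x y = 0 \<longleftrightarrow> x = y) \<and> d x y = d y x) \<and>
     (\<forall>x\<in>M. \<forall>y\<in>M. \<forall>z\<in>M. d x z powr p \<le> d x y powr p + d y z powr p)"

definition reach_in :: "'a set set \<Rightarrow> 'a set \<Rightarrow> 'a \<Rightarrow> 'a \<Rightarrow> bool" where
  "reach_in E A u v \<longleftrightarrow> (u, v) \<in> {(a, b). a \<in> A \<and> b \<in> A \<and> {a, b} \<in> E}\<^sup>*"

definition is_tree :: "'a set \<Rightarrow> 'a set set \<Rightarrow> bool" where
  "is_tree K E \<longleftrightarrow> finite K \<and> K \<noteq> {} \<and>
     E \<subseteq> {{u, v} | u v. u \<in> K \<and> v \<in> K \<and> u \<noteq> v} \<and>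
     card E + 1 = card K \<and>
     (\<forall>u\<in>K. \<forall>v\<in>K. reach_in E K u v)"

text \<open>The set \<T>(K) of trees with vertex set K (rooted at the base point,
  which is passed separately to the functions below).\<close>
definition trees :: "'a set \<Rightarrow> 'a set set set" where
  "trees K = {E. is_tree K E}"

text \<open>pred_T(x): the neighbour of x on the path from x to the root r.\<close>
definition tpred :: "'a set \<Rightarrow> 'a set set \<Rightarrow> 'a \<Rightarrow> 'a \<Rightarrow> 'a" where
  "tpred K E r x = (THE y. {y, x} \<in> E \<and> reach_in E (K - {x}) r y)"

definition subtree :: "'a set \<Rightarrow> 'a set set \<Rightarrow> 'a \<Rightarrow> 'a \<Rightarrow> 'a set" where
  "subtree K E r x = {y \<in> K. reach_in (E - {{tpred K E r x, x}}) K x y}"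

definition tree_norm :: "real \<Rightarrow> ('a \<Rightarrow> 'a \<Rightarrow> real) \<Rightarrow> 'a set \<Rightarrow> 'a \<Rightarrow> 'a set set \<Rightarrow> ('a \<Rightarrow> real) \<Rightarrow> real" where
  "tree_norm p d K r E b =
     (\<Sum>x\<in>K - {r}. \<bar>(\<Sum>y\<in>subtree K E r x. b y) * d (tpred K E r x) x\<bar> powr p) powr (1 / p)"

end

theory Submission
  imports Defs
begin

lemma reach_refl: "reach_in E A u u" by (simp add: reach_in_def)

lemma reach_step: "reach_in E A u v \<Longrightarrow> v\<in>A \<Longrightarrow> w\<in>A \<Longrightarrow> {v,w}\<in>E \<Longrightarrow> reach_in E A u w"
  unfolding reach_in_def by (erule rtrancl_into_rtrancl) auto

lemma reach_trans: "reach_in E A u v \<Longrightarrow> reach_in E A v w \<Longrightarrow> reach_in E A u w"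
  unfolding reach_in_def by (rule rtrancl_trans)

lemma reach_sym: "reach_in E A u v \<Longrightarrow> reach_in E A v u"
proof -
  have "sym {(a,b). a\<in>A \<and> b\<in>A \<and> {a,b}\<in>E}" by (auto simp: sym_def insert_commute)
  hence "sym ({(a,b). a\<in>A \<and> b\<in>A \<and> {a,b}\<in>E}\<^sup>*)" by (rule sym_rtrancl)
  thus "reach_in E A u v \<Longrightarrow> reach_in E A v u" unfolding reach_in_def by (auto dest: symD)
qed

lemma reach_mono: "reach_in E A u v \<Longrightarrow> E\<subseteq>E' \<Longrightarrow> A\<subseteq>A' \<Longrightarrow> reach_in E' A' u v"
proof -
  assume h: "reach_in E A u v" "E\<subseteq>E'" "A\<subseteq>A'"
  have "{(a,b). a\<in>A \<and> b\<in>A \<and> {a,b}\<in>E} \<subseteq> {(a,b). a\<in>A' \<and> b\<in>A' \<and> {a,b}\<in>E'}" using h by auto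
  thus ?thesis using h(1) unfolding reach_in_def using rtrancl_mono by blast
qed

lemma reach_mem: "reach_in E A u v \<Longrightarrow> u \<noteq> v \<Longrightarrow> u\<in>A \<and> v\<in>A"
  unfolding reach_in_def
  by (metis (no_types, lifting) case_prodD converse_rtranclE mem_Collect_eq rtranclE)

lemma reach_avoid: "reach_in E (K-{x}) u v \<Longrightarrow> x\<in>e \<Longrightarrow> K-{x} \<subseteq> K' \<Longrightarrow> reach_in (E-{e}) K' u v"
proof -
  assume h: "reach_in E (K-{x}) u v" "x\<in>e" "K-{x} \<subseteq> K'"
  have "{(a,b). a\<in>K-{x} \<and> b\<in>K-{x} \<and> {a,b}\<in>E} \<subseteq> {(a,b). a\<in>K' \<and> b\<in>K' \<and> {a,b}\<in>E-{e}}"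
    using h by auto
  thus ?thesis using h(1) unfolding reach_in_def using rtrancl_mono by blast
qed

lemma reach_induct[consumes 1, case_names base step]:
  assumes "reach_in E A u v" and "P u"
    and "\<And>w w'. reach_in E A u w \<Longrightarrow> P w \<Longrightarrow> w\<in>A \<Longrightarrow> w'\<in>A \<Longrightarrow> {w,w'}\<in>E \<Longrightarrow> P w'"
  shows "P v"
  using assms(1) unfolding reach_in_def
proof (induction rule: rtrancl_induct)
  case base then show ?case using assms(2) by simp
next
  case (step y z) then show ?case using assms(3) unfolding reach_in_def by auto
qed

lemma conn_card:
  assumes fin: "finite K" and r: "r\<in>K" and finE: "finite E" and conn: "\<forall>v\<in>K. reach_in E K r v"
  shows "card K \<le> card E + 1"
proof -
  define R where "R = {(a,b). a\<in>K \<and> b\<in>K \<and> {a,b}\<in>E}"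
  define dist where "dist v = (LEAST n. (r,v) \<in> R^^n)" for v
  have ex: "\<exists>n. (r,v) \<in> R^^n" if "v\<in>K" for v
  proof -
    have "(r,v) \<in> R\<^sup>*" using conn that by (simp add: reach_in_def R_def)
    thus ?thesis by (simp add: rtrancl_power)
  qed
  have dv: "(r,v) \<in> R^^(dist v)" if "v\<in>K" for v
    using ex[OF that] unfolding dist_def by (rule LeastI_ex)
  have dle: "dist v \<le> n" if "(r,v) \<in> R^^n" for v n unfolding dist_def using that by (rule Least_le)
  have "\<forall>v\<in>K-{r}. \<exists>w. {w,v}\<in>E \<and> dist w + 1 = dist v"
  proof
    fix v assume v: "v\<in>K-{r}"
    have "dist v \<noteq> 0" proof assume "dist v = 0" thus False using dv[of v] v by auto qed
    then obtain m where m: "dist v = Suc m" by (cases "dist v") auto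
    with dv[of v] v have "(r,v) \<in> R^^m O R" by auto
    then obtain w where w1: "(r,w)\<in>R^^m" and w2: "(w,v)\<in>R" by auto
    have a: "dist w \<le> m" using dle w1 by blast
    have wK: "w\<in>K" using w2 R_def by auto
    have "(r,v) \<in> R^^(dist w) O R" using dv[OF wK] w2 by auto
    hence "(r,v) \<in> R^^(Suc (dist w))" by simp
    hence "Suc m \<le> Suc (dist w)" using dle m by metis
    hence "dist w = m" using a by simp
    moreover have "{w,v}\<in>E" using w2 R_def by auto
    ultimately show "\<exists>w. {w,v}\<in>E \<and> dist w + 1 = dist v" using m by auto
  qed
  then have "\<exists>w. \<forall>v\<in>K-{r}. {w v,v}\<in>E \<and> dist (w v) + 1 = dist v" by (rule bchoice)
  then obtain w where w: "\<forall>v\<in>K-{r}. {w v,v}\<in>E \<and> dist (w v) + 1 = dist v" by blast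
  have inj: "inj_on (\<lambda>v. {w v, v}) (K-{r})"
  proof (rule inj_onI)
    fix v v' assume v: "v\<in>K-{r}" "v'\<in>K-{r}" and eq: "{w v, v} = {w v', v'}"
    show "v = v'"
    proof (rule ccontr)
      assume "v\<noteq>v'" with eq have "w v = v' \<and> v = w v'" by (auto simp: doubleton_eq_iff)
      hence "dist v' + 1 = dist v" "dist v + 1 = dist v'" using w v by metis+
      thus False by simp
    qed
  qed
  have "(\<lambda>v. {w v, v}) ` (K-{r}) \<subseteq> E" using w by auto
  hence "card (K-{r}) \<le> card E" using card_inj_on_le[OF inj _ finE] by blast
  moreover have "card (K-{r}) = card K - 1" using r fin by simp
  moreover have "card K > 0" using r fin card_gt_0_iff by blast
  ultimately show ?thesis by linarith
qed

lemma tree_fin: "is_tree K E \<Longrightarrow> finite E"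
proof -
  assume h: "is_tree K E"
  hence "E \<subseteq> Pow K" unfolding is_tree_def by auto
  thus ?thesis using h unfolding is_tree_def by (meson finite_Pow_iff finite_subset)
qed

lemma tree_edge: "is_tree K E \<Longrightarrow> {a,b}\<in>E \<Longrightarrow> a\<in>K \<and> b\<in>K \<and> a\<noteq>b"
  unfolding is_tree_def by (auto simp: doubleton_eq_iff)

lemma tree_conn: "is_tree K E \<Longrightarrow> u\<in>K \<Longrightarrow> v\<in>K \<Longrightarrow> reach_in E K u v"
  unfolding is_tree_def by blast

lemma tree_no_cycle:
  assumes t: "is_tree K E" and uv: "{u,v}\<in>E"
  shows "\<not> reach_in (E-{{u,v}}) K u v"
proof
  assume h: "reach_in (E-{{u,v}}) K u v"
  let ?E' = "E-{{u,v}}"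
  have finE: "finite E" using t by (rule tree_fin)
  have uK: "u\<in>K" "v\<in>K" using tree_edge[OF t uv] by auto
  have sub: "{(a,b). a\<in>K\<and>b\<in>K\<and>{a,b}\<in>E} \<subseteq> {(a,b). a\<in>K\<and>b\<in>K\<and>{a,b}\<in>?E'}\<^sup>*"
  proof (clarify)
    fix a b assume ab: "a\<in>K" "b\<in>K" "{a,b}\<in>E"
    show "(a,b) \<in> {(a,b). a\<in>K\<and>b\<in>K\<and>{a,b}\<in>?E'}\<^sup>*"
    proof (cases "{a,b} = {u,v}")
      case True
      then have "(a=u\<and>b=v) \<or> (a=v\<and>b=u)" by (auto simp: doubleton_eq_iff)
      then show ?thesis using h reach_sym[OF h] unfolding reach_in_def by auto
    next
      case False
      then show ?thesis using ab by auto
    qed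
  qed
  have conn: "\<forall>v'\<in>K. reach_in ?E' K u v'"
  proof
    fix v' assume "v'\<in>K"
    hence "reach_in E K u v'" using tree_conn[OF t uK(1)] by blast
    thus "reach_in ?E' K u v'" unfolding reach_in_def using rtrancl_subset_rtrancl[OF sub] by blast
  qed
  have "card K \<le> card ?E' + 1"
    using conn_card[OF _ uK(1) _ conn] t finE unfolding is_tree_def by auto
  moreover have "card ?E' = card E - 1" using uv finE by simp
  moreover have "card E > 0" using uv finE card_gt_0_iff by blast
  ultimately show False using t unfolding is_tree_def by linarith
qed

lemma tpred_ex:
  assumes t: "is_tree K E" and r: "r\<in>K" and x: "x\<in>K" "x\<noteq>r"
  shows "\<exists>!y. {y,x}\<in>E \<and> reach_in E (K-{x}) r y"
proof -
  have inv: "(\<exists>y. {y,x}\<in>E \<and> reach_in E (K-{x}) r y) \<or> reach_in E (K-{x}) r w"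
    if "reach_in E K r w" for w
    using that
  proof (induction rule: reach_induct)
    case base then show ?case by (simp add: reach_refl)
  next
    case (step w w')
    show ?case
    proof (cases "\<exists>y. {y,x}\<in>E \<and> reach_in E (K-{x}) r y")
      case True then show ?thesis by blast
    next
      case False
      hence rw: "reach_in E (K-{x}) r w" using step by blast
      have wx: "w \<noteq> x" using reach_mem[OF rw] x by blast
      show ?thesis
      proof (cases "w' = x")
        case True then show ?thesis using rw step by blast
      next
        case False then show ?thesis using reach_step[OF rw] step wx by blast
      qed
    qed
  qed
  have "\<not> reach_in E (K-{x}) r x" using reach_mem[of E "K-{x}" r x] x by blast
  hence ex: "\<exists>y. {y,x}\<in>E \<and> reach_in E (K-{x}) r y" using inv tree_conn[OF t r x(1)] by blast
  have uniq: "y1 = y2" if y1: "{y1,x}\<in>E" "reach_in E (K-{x}) r y1"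
    and y2: "{y2,x}\<in>E" "reach_in E (K-{x}) r y2" for y1 y2
  proof (rule ccontr)
    assume ne: "y1 \<noteq> y2"
    have "reach_in E (K-{x}) y1 y2" using reach_trans[OF reach_sym[OF y1(2)] y2(2)] .
    hence a: "reach_in (E-{{y1,x}}) K y1 y2" by (rule reach_avoid) auto
    have "{y2,x} \<noteq> {y1,x}" using ne tree_edge[OF t y1(1)] by (auto simp: doubleton_eq_iff)
    hence "reach_in (E-{{y1,x}}) K y1 x"
      using reach_step[OF a, of x] tree_edge[OF t y2(1)] y2(1) by blast
    thus False using tree_no_cycle[OF t y1(1)] by blast
  qed
  show ?thesis using ex uniq by blast
qed

lemma tpred_prop:
  assumes "is_tree K E" "r\<in>K" "x\<in>K" "x\<noteq>r"
  shows "{tpred K E r x, x}\<in>E \<and> reach_in E (K-{x}) r (tpred K E r x)"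
  unfolding tpred_def using theI'[OF tpred_ex[OF assms]] .

lemma subtree_root:
  assumes t: "is_tree K E" and r: "r\<in>K" and x: "x\<in>K" "x\<noteq>r"
  shows "\<not> reach_in (E - {{tpred K E r x, x}}) K x r"
proof
  let ?q = "tpred K E r x"
  assume h: "reach_in (E - {{?q, x}}) K x r"
  have P: "{?q,x}\<in>E" "reach_in E (K-{x}) r ?q" using tpred_prop[OF assms] by auto
  have "reach_in (E - {{?q, x}}) K r ?q" using P(2) by (rule reach_avoid) auto
  hence "reach_in (E - {{?q, x}}) K ?q x" using reach_sym reach_trans h by metis
  thus False using tree_no_cycle[OF t P(1)] by blast
qed

lemma tn_powr: "0<p \<Longrightarrow> tree_norm p d K r E b powr p =
   (\<Sum>x\<in>K - {r}. \<bar>(\<Sum>y\<in>subtree K E r x. b y) * d (tpred K E r x) x\<bar> powr p)"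
  unfolding tree_norm_def by (simp add: powr_powr sum_nonneg)

theorem lemma3p13:
  fixes p :: real and M M1 M2 :: "'a set" and d :: "'a \<Rightarrow> 'a \<Rightarrow> real"
    and z x0 :: 'a and T T1 T2 :: "'a set set" and a :: "'a \<Rightarrow> real"
  assumes "0 < p" and "p \<le> 1"
    and "finite M" and "z \<in> M" and "p_metric M d p"
    and "M1 \<union> M2 = M" and "z \<in> M2" and "M1 \<inter> M2 = {x0}"
    and "x0 \<in> M" and "x0 \<noteq> z" and "card M1 \<ge> 2"
    and "T \<in> trees M" and "T1 \<in> trees M1" and "T2 \<in> trees M2"
    and "T = T1 \<union> T2"
  shows "tree_norm p d M z T a powr p =
           tree_norm p d M1 x0 T1 a powr p
         + tree_norm p d M2 z T2 (a(x0 := (\<Sum>w\<in>M1. a w))) powr p"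
proof -
  have t: "is_tree M T" "is_tree M1 T1" "is_tree M2 T2" using assms by (auto simp: trees_def)
  have x0: "x0\<in>M1" "x0\<in>M2" using assms by auto
  have zM1: "z\<notin>M1" using assms by auto
  have MM: "M1 \<subseteq> M" "M2 \<subseteq> M" using assms by auto
  have cap: "\<And>w. w\<in>M1 \<Longrightarrow> w\<in>M2 \<Longrightarrow> w = x0" using assms by auto
  have fin: "finite M1" "finite M2" using MM assms finite_subset by auto
  have e1: "\<And>u v. {u,v}\<in>T1 \<Longrightarrow> u\<in>M1 \<and> v\<in>M1 \<and> u\<noteq>v" using tree_edge[OF t(2)] by blast
  have e2: "\<And>u v. {u,v}\<in>T2 \<Longrightarrow> u\<in>M2 \<and> v\<in>M2 \<and> u\<noteq>v" using tree_edge[OF t(3)] by blast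
  have TT: "T = T1 \<union> T2" using assms by simp

  have pred1: "tpred M T z x = tpred M1 T1 x0 x" if x: "x\<in>M1" "x\<noteq>x0" for x
  proof -
    have xM2: "x\<notin>M2" using x cap by blast
    have "({y,x}\<in>T \<and> reach_in T (M-{x}) z y) = ({y,x}\<in>T1 \<and> reach_in T1 (M1-{x}) x0 y)" for y
    proof
      assume h: "{y,x}\<in>T \<and> reach_in T (M-{x}) z y"
      have yT1: "{y,x}\<in>T1" using h e2 xM2 TT by blast
      have yM1: "y\<in>M1" using e1 yT1 by blast
      have inv: "w\<in>M2 \<or> reach_in T1 (M1-{x}) x0 w" if "reach_in T (M-{x}) z w" for w
        using that
      proof (induction rule: reach_induct)
        case base then show ?case using assms by simp
      next
        case (step w w')
        show ?case
        proof (cases "{w,w'}\<in>T2")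
          case True then show ?thesis using e2 by blast
        next
          case False
          hence ww: "{w,w'}\<in>T1" using step TT by blast
          hence wM: "w\<in>M1" "w'\<in>M1" using e1 by auto
          show ?thesis
          proof (cases "w\<in>M2")
            case True
            hence "w = x0" using cap wM by blast
            hence "reach_in T1 (M1-{x}) x0 w'"
              using reach_step[of T1 "M1-{x}" x0 x0 w', OF reach_refl] ww wM step x0 by auto
            then show ?thesis by blast
          next
            case False
            hence "reach_in T1 (M1-{x}) x0 w" using step by blast
            moreover have "w\<in>M1-{x}" "w'\<in>M1-{x}" using wM step by auto
            ultimately show ?thesis using reach_step[of T1 "M1-{x}" x0 w w'] ww by blast
          qed
        qed
      qed
      have "reach_in T1 (M1-{x}) x0 y"
      proof (cases "y\<in>M2")
        case True then show ?thesis using cap yM1 reach_refl by metis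
      next
        case False then show ?thesis using inv h by blast
      qed
      then show "{y,x}\<in>T1 \<and> reach_in T1 (M1-{x}) x0 y" using yT1 by blast
    next
      assume h: "{y,x}\<in>T1 \<and> reach_in T1 (M1-{x}) x0 y"
      have "reach_in T2 M2 z x0" using tree_conn[OF t(3) assms(7) x0(2)] .
      hence a: "reach_in T (M-{x}) z x0" using reach_mono[of T2 M2 z x0 T "M-{x}"] TT MM xM2 by blast
      have "reach_in T (M-{x}) x0 y" using h reach_mono[of T1 "M1-{x}" x0 y T "M-{x}"] TT MM by blast
      then show "{y,x}\<in>T \<and> reach_in T (M-{x}) z y" using a reach_trans[of T "M-{x}" z x0 y] h TT by blast
    qed
    then show ?thesis unfolding tpred_def by simp
  qed

  have sub1: "subtree M T z x = subtree M1 T1 x0 x" if x: "x\<in>M1" "x\<noteq>x0" for x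
  proof -
    define q where "q = tpred M1 T1 x0 x"
    have qq: "tpred M T z x = q" using pred1[OF x] q_def by simp
    have nr: "\<not> reach_in (T1 - {{q,x}}) M1 x x0" using subtree_root[OF t(2) x0(1) x] q_def by simp
    have inv: "w\<in>M1 \<and> w \<noteq> x0 \<and> reach_in (T1 - {{q,x}}) M1 x w" if "reach_in (T - {{q,x}}) M x w" for w
      using that
    proof (induction rule: reach_induct)
      case base then show ?case using x reach_refl by metis
    next
      case (step w w')
      have "w\<notin>M2" using step cap by blast
      hence ww: "{w,w'}\<in>T1 - {{q,x}}" using step TT e2 by blast
      hence wM: "w'\<in>M1" using e1 by blast
      have r: "reach_in (T1 - {{q,x}}) M1 x w'" using reach_step[of _ M1 x w w'] step ww wM by blast
      moreover have "w' \<noteq> x0" using r nr by blast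
      ultimately show ?case using wM by blast
    qed
    show ?thesis
    proof
      show "subtree M T z x \<subseteq> subtree M1 T1 x0 x"
        unfolding subtree_def qq q_def[symmetric] using inv by blast
    next
      show "subtree M1 T1 x0 x \<subseteq> subtree M T z x"
        unfolding subtree_def qq q_def[symmetric]
        using reach_mono[of "T1 - {{q,x}}" M1 x _ "T - {{q,x}}" M] TT MM by blast
    qed
  qed

  have pred2: "tpred M T z x = tpred M2 T2 z x" if x: "x\<in>M2" "x\<noteq>z" for x
  proof -
    have "({y,x}\<in>T \<and> reach_in T (M-{x}) z y) = ({y,x}\<in>T2 \<and> reach_in T2 (M2-{x}) z y)" for y
    proof
      assume h: "{y,x}\<in>T \<and> reach_in T (M-{x}) z y"
      have inv: "(w\<in>M2 \<and> reach_in T2 (M2-{x}) z w) \<or> (w\<in>M1 \<and> w\<noteq>x0 \<and> x\<noteq>x0 \<and> reach_in T2 (M2-{x}) z x0)"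
        if "reach_in T (M-{x}) z w" for w
        using that
      proof (induction rule: reach_induct)
        case base then show ?case using assms(7) by (simp add: reach_refl)
      next
        case (step w w')
        show ?case
        proof (cases "{w,w'}\<in>T2")
          case True
          hence wM: "w\<in>M2" "w'\<in>M2" using e2 by auto
          hence "w\<in>M2 \<and> reach_in T2 (M2-{x}) z w" using step cap by blast
          hence "reach_in T2 (M2-{x}) z w'" using reach_step[of T2 "M2-{x}" z w w'] step wM True by blast
          then show ?thesis using wM by blast
        next
          case False
          hence ww: "{w,w'}\<in>T1" using step TT by blast
          hence wM: "w\<in>M1" "w'\<in>M1" using e1 by auto
          have xx: "x\<noteq>x0 \<and> reach_in T2 (M2-{x}) z x0"
          proof (cases "w\<in>M2")
            case True
            hence "w = x0" using cap wM by blast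
            then show ?thesis using step True by blast
          next
            case False then show ?thesis using step by blast
          qed
          show ?thesis
          proof (cases "w' = x0")
            case True then show ?thesis using xx x0 by blast
          next
            case False then show ?thesis using xx wM by blast
          qed
        qed
      qed
      have yx: "y \<noteq> x" using h tree_edge[OF t(1)] by blast
      from inv h have "(y\<in>M2 \<and> reach_in T2 (M2-{x}) z y) \<or> (y\<in>M1 \<and> y\<noteq>x0 \<and> x\<noteq>x0)" by blast
      then show "{y,x}\<in>T2 \<and> reach_in T2 (M2-{x}) z y"
      proof
        assume a: "y\<in>M2 \<and> reach_in T2 (M2-{x}) z y"
        have "{y,x}\<notin>T1" using e1 a x cap yx by blast
        then show ?thesis using a h TT by blast
      next
        assume a: "y\<in>M1 \<and> y\<noteq>x0 \<and> x\<noteq>x0"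
        have "{y,x}\<notin>T1" using e1 a x cap by blast
        moreover have "{y,x}\<notin>T2" using e2 a cap by blast
        ultimately show ?thesis using h TT by blast
      qed
    next
      assume h: "{y,x}\<in>T2 \<and> reach_in T2 (M2-{x}) z y"
      then show "{y,x}\<in>T \<and> reach_in T (M-{x}) z y"
        using reach_mono[of T2 "M2-{x}" z y T "M-{x}"] TT MM by blast
    qed
    then show ?thesis unfolding tpred_def by simp
  qed

  have sub2: "subtree M T z x = subtree M2 T2 z x \<union> (if x0 \<in> subtree M2 T2 z x then M1 else {})"
    if x: "x\<in>M2" "x\<noteq>z" for x
  proof -
    define q where "q = tpred M2 T2 z x"
    have qq: "tpred M T z x = q" using pred2[OF x] q_def by simp
    have qP: "{q,x}\<in>T2" using tpred_prop[OF t(3) _ x] assms q_def by blast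
    have qM: "q\<in>M2" "q\<noteq>x" using e2[OF qP] by auto
    have qT1: "{q,x}\<notin>T1" using e1 qM x cap by blast
    define S2 where "S2 = subtree M2 T2 z x"
    have S2: "S2 = {y\<in>M2. reach_in (T2 - {{q,x}}) M2 x y}" unfolding S2_def subtree_def q_def by simp
    have ST: "subtree M T z x = {y\<in>M. reach_in (T - {{q,x}}) M x y}" unfolding subtree_def qq by simp
    have inv: "(w\<in>M2 \<and> reach_in (T2 - {{q,x}}) M2 x w) \<or> (w\<in>M1 \<and> reach_in (T2 - {{q,x}}) M2 x x0)"
      if "reach_in (T - {{q,x}}) M x w" for w
      using that
    proof (induction rule: reach_induct)
      case base then show ?case using x reach_refl by metis
    next
      case (step w w')
      show ?case
      proof (cases "{w,w'}\<in>T1")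
        case True
        hence wM: "w\<in>M1" "w'\<in>M1" using e1 by auto
        have "reach_in (T2 - {{q,x}}) M2 x x0" using step wM cap by blast
        then show ?thesis using wM by blast
      next
        case False
        hence ww: "{w,w'}\<in>T2 - {{q,x}}" using step TT by blast
        hence wM: "w\<in>M2" "w'\<in>M2" using e2 by auto
        have "reach_in (T2 - {{q,x}}) M2 x w" using step wM cap by blast
        hence "reach_in (T2 - {{q,x}}) M2 x w'" using reach_step[of _ M2 x w w'] ww wM by blast
        then show ?thesis using wM by blast
      qed
    qed
    have "subtree M T z x = S2 \<union> (if x0 \<in> S2 then M1 else {})"
    proof
      show "subtree M T z x \<subseteq> S2 \<union> (if x0 \<in> S2 then M1 else {})"
        unfolding ST S2 using inv x0 by auto
    next
      have A: "S2 \<subseteq> subtree M T z x"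
        unfolding ST S2 using reach_mono[of "T2 - {{q,x}}" M2 x _ "T - {{q,x}}" M] TT MM by blast
      have B: "M1 \<subseteq> subtree M T z x" if x0S: "x0 \<in> S2"
      proof
        fix y assume y: "y\<in>M1"
        have "reach_in T1 M1 x0 y" using tree_conn[OF t(2) x0(1) y] .
        hence "reach_in (T - {{q,x}}) M x0 y" using reach_mono[of T1 M1 x0 y "T - {{q,x}}" M] TT MM qT1 by blast
        moreover have "reach_in (T - {{q,x}}) M x x0" using x0S A unfolding ST by blast
        ultimately show "y \<in> subtree M T z x" unfolding ST using reach_trans[of "T - {{q,x}}" M x x0 y] y MM by blast
      qed
      show "S2 \<union> (if x0 \<in> S2 then M1 else {}) \<subseteq> subtree M T z x" using A B by auto
    qed
    then show ?thesis unfolding S2_def .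
  qed

  define S where "S = (\<Sum>w\<in>M1. a w)"
  define a2 where "a2 = a(x0 := S)"
  define F where "F x = \<bar>(\<Sum>y\<in>subtree M T z x. a y) * d (tpred M T z x) x\<bar> powr p" for x
  have split: "M - {z} = (M1 - {x0}) \<union> (M2 - {z})" using assms by auto
  have disj: "(M1 - {x0}) \<inter> (M2 - {z}) = {}" using assms by auto
  have sumF: "sum F (M - {z}) = sum F (M1 - {x0}) + sum F (M2 - {z})"
    unfolding split using disj fin by (simp add: sum.union_disjoint)
  have s1: "sum F (M1 - {x0}) = (\<Sum>x\<in>M1 - {x0}. \<bar>(\<Sum>y\<in>subtree M1 T1 x0 x. a y) * d (tpred M1 T1 x0 x) x\<bar> powr p)"
    by (rule sum.cong) (auto simp: F_def sub1 pred1)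
  have s2: "sum F (M2 - {z}) = (\<Sum>x\<in>M2 - {z}. \<bar>(\<Sum>y\<in>subtree M2 T2 z x. a2 y) * d (tpred M2 T2 z x) x\<bar> powr p)"
  proof (rule sum.cong)
    fix x assume x: "x \<in> M2 - {z}"
    define S2 where "S2 = subtree M2 T2 z x"
    have S2M: "S2 \<subseteq> M2" unfolding S2_def subtree_def by auto
    have finS2: "finite S2" using S2M fin finite_subset by blast
    have "(\<Sum>y\<in>subtree M T z x. a y) = (\<Sum>y\<in>S2. a2 y)"
    proof (cases "x0 \<in> S2")
      case True
      have e: "subtree M T z x = (S2 - {x0}) \<union> M1" using sub2[of x] x True S2_def x0 by auto
      have dj: "(S2 - {x0}) \<inter> M1 = {}" using S2M cap by blast
      have "(\<Sum>y\<in>subtree M T z x. a y) = (\<Sum>y\<in>S2 - {x0}. a y) + S"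
        unfolding e S_def using dj fin finS2 by (simp add: sum.union_disjoint)
      also have "(\<Sum>y\<in>S2 - {x0}. a y) = (\<Sum>y\<in>S2 - {x0}. a2 y)" by (rule sum.cong) (auto simp: a2_def)
      also have "\<dots> + S = (\<Sum>y\<in>S2. a2 y)"
        using sum.remove[OF finS2 True, of a2] by (simp add: a2_def)
      finally show ?thesis .
    next
      case False
      have e: "subtree M T z x = S2" using sub2[of x] x False S2_def by auto
      show ?thesis unfolding e using False by (intro sum.cong) (auto simp: a2_def)
    qed
    then show "F x = \<bar>(\<Sum>y\<in>subtree M2 T2 z x. a2 y) * d (tpred M2 T2 z x) x\<bar> powr p"
      unfolding F_def S2_def using pred2[of x] x by simp
  qed simp
  have L: "tree_norm p d M z T a powr p = sum F (M-{z})"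
    unfolding tn_powr[OF assms(1)] F_def by (rule refl)
  have L1: "tree_norm p d M1 x0 T1 a powr p = sum F (M1-{x0})"
    unfolding tn_powr[OF assms(1)] s1 by (rule refl)
  have L2: "tree_norm p d M2 z T2 (a(x0 := (\<Sum>w\<in>M1. a w))) powr p = sum F (M2-{z})"
    unfolding tn_powr[OF assms(1)] s2 a2_def S_def by (rule refl)
  show ?thesis unfolding L L1 L2 sumF by (rule refl)
qed

end
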